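(* Let $K$ be a field, $\mathcal A$ a $K$-algebra, $\vartheta$ any one of the four types (left, right, pre-two-sided, two-sided), and $0\neq a\in\mathcal A$. Then the one-dimensional subspace $Ka$ is a $\vartheta$-Mathieu subspace of $\mathcal A$ if and only if one of the following holds: (1) $Ka$ is a $\vartheta$-ideal of $\mathcal A$, equivalently $Ka=(a)_\vartheta$; (2) $a$ is not a quasi-idempotent of $\mathcal A$.
   Context: All algebras are associative and unital. $a$ is a quasi-idempotent if $a^2=ra$ for some $r\in K^\times$. A $\vartheta$-ideal is a left ideal if $\vartheta$ = left, right ideal if $\vartheta$ = right, two-sided ideal if $\vartheta$ is pre-two-sided or two-sided. $(x)_\vartheta$ is $\mathcal Ax$ if $\vartheta$ = left, $x\mathcal A$ if right, the two-sided ideal generated by $x$ if two-sided, and $x\mathcal A+\mathcal Ax$ if pre-two-sided. A $K$-subspace $V$ is a left (resp. right) Mathieu subspace if whenever $b\in\mathcal A$ satisfies $b^m\in V$ for all $m\ge1$, then for every $c\in\mathcal A$, $cb^m\in V$ (resp. $b^mc\in V$) for all sufficiently large $m$; pre-two-sided if both left and right; two-sided if whenever $b^m\in V$ for all $m\ge1$, then for all $c,d\in\mathcal A$, $cb^md\in V$ for all sufficiently large $m$. *)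

theory Defs
  imports Main "HOL.Vector_Spaces"
begin

definition is_algebra :: "('k::field \<Rightarrow> 'a::ring_1 \<Rightarrow> 'a) \<Rightarrow> bool" where
  "is_algebra smul \<longleftrightarrow> Vector_Spaces.vector_space smul \<and>
     (\<forall>c x y. smul c (x * y) = smul c x * y \<and> smul c (x * y) = x * smul c y)"

datatype mtype = Left | Right | PreTwoSided | TwoSided

definition line :: "('k::field \<Rightarrow> 'a::ring_1 \<Rightarrow> 'a) \<Rightarrow> 'a \<Rightarrow> 'a set" where
  "line smul a = range (\<lambda>c. smul c a)"

definition quasi_idempotent :: "('k::field \<Rightarrow> 'a::ring_1 \<Rightarrow> 'a) \<Rightarrow> 'a \<Rightarrow> bool" where
  "quasi_idempotent smul a \<longleftrightarrow> (\<exists>r. r \<noteq> 0 \<and> a * a = smul r a)"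

definition left_mathieu :: "('k::field \<Rightarrow> 'a::ring_1 \<Rightarrow> 'a) \<Rightarrow> 'a set \<Rightarrow> bool" where
  "left_mathieu smul V \<longleftrightarrow> Modules.module.subspace smul V \<and>
     (\<forall>b. (\<forall>m\<ge>1. b ^ m \<in> V) \<longrightarrow> (\<forall>c. \<exists>N. \<forall>m\<ge>N. c * b ^ m \<in> V))"

definition right_mathieu :: "('k::field \<Rightarrow> 'a::ring_1 \<Rightarrow> 'a) \<Rightarrow> 'a set \<Rightarrow> bool" where
  "right_mathieu smul V \<longleftrightarrow> Modules.module.subspace smul V \<and>
     (\<forall>b. (\<forall>m\<ge>1. b ^ m \<in> V) \<longrightarrow> (\<forall>c. \<exists>N. \<forall>m\<ge>N. b ^ m * c \<in> V))"

definition two_sided_mathieu :: "('k::field \<Rightarrow> 'a::ring_1 \<Rightarrow> 'a) \<Rightarrow> 'a set \<Rightarrow> bool" where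
  "two_sided_mathieu smul V \<longleftrightarrow> Modules.module.subspace smul V \<and>
     (\<forall>b. (\<forall>m\<ge>1. b ^ m \<in> V) \<longrightarrow> (\<forall>c d. \<exists>N. \<forall>m\<ge>N. c * b ^ m * d \<in> V))"

fun mathieu :: "mtype \<Rightarrow> ('k::field \<Rightarrow> 'a::ring_1 \<Rightarrow> 'a) \<Rightarrow> 'a set \<Rightarrow> bool" where
  "mathieu Left smul V = left_mathieu smul V"
| "mathieu Right smul V = right_mathieu smul V"
| "mathieu PreTwoSided smul V = (left_mathieu smul V \<and> right_mathieu smul V)"
| "mathieu TwoSided smul V = two_sided_mathieu smul V"

text \<open>theta-ideals: K-subspaces closed under left / right / both multiplications
(pre-two-sided and two-sided both mean two-sided ideal).\<close>
fun ideal :: "mtype \<Rightarrow> ('k::field \<Rightarrow> 'a::ring_1 \<Rightarrow> 'a) \<Rightarrow> 'a set \<Rightarrow> bool" where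
  "ideal Left smul I = (Modules.module.subspace smul I \<and> (\<forall>x\<in>I. \<forall>c. c * x \<in> I))"
| "ideal Right smul I = (Modules.module.subspace smul I \<and> (\<forall>x\<in>I. \<forall>c. x * c \<in> I))"
| "ideal PreTwoSided smul I =
     (Modules.module.subspace smul I \<and> (\<forall>x\<in>I. \<forall>c. c * x \<in> I \<and> x * c \<in> I))"
| "ideal TwoSided smul I =
     (Modules.module.subspace smul I \<and> (\<forall>x\<in>I. \<forall>c. c * x \<in> I \<and> x * c \<in> I))"

fun gen :: "mtype \<Rightarrow> ('k::field \<Rightarrow> 'a::ring_1 \<Rightarrow> 'a) \<Rightarrow> 'a \<Rightarrow> 'a set" where
  "gen Left smul x = {c * x | c. True}"
| "gen Right smul x = {x * c | c. True}"
| "gen PreTwoSided smul x = {x * c + d * x | c d. True}"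
| "gen TwoSided smul x = \<Inter>{I. ideal TwoSided smul I \<and> x \<in> I}"

end

theory Submission
  imports Defs
begin

locale alg_ctx =
  fixes smul :: "'k::field \<Rightarrow> 'a::ring_1 \<Rightarrow> 'a"
  assumes alg: "is_algebra smul"
begin

lemma vs: "vector_space smul" using alg unfolding is_algebra_def by blast

sublocale vector_space smul by (rule vs)

lemma ml: "smul c (x * y) = smul c x * y" using alg unfolding is_algebra_def by blast
lemma mr: "smul c (x * y) = x * smul c y" using alg unfolding is_algebra_def by blast

lemma line_sub: "subspace (line smul a)"
  unfolding subspace_def line_def
proof (intro conjI ballI allI)
  show "0 \<in> range (\<lambda>c. smul c a)" by (rule range_eqI[of _ _ 0]) simp
next
  fix x y assume "x \<in> range (\<lambda>c. smul c a)" "y \<in> range (\<lambda>c. smul c a)"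
  then obtain c d where "x = smul c a" "y = smul d a" by auto
  then show "x + y \<in> range (\<lambda>c. smul c a)"
    by (intro range_eqI[of _ _ "c+d"]) (simp add: scale_left_distrib)
next
  fix k x assume "x \<in> range (\<lambda>c. smul c a)"
  then obtain c where "x = smul c a" by auto
  then show "smul k x \<in> range (\<lambda>c. smul c a)"
    by (intro range_eqI[of _ _ "k*c"]) simp
qed

lemma in_line: "smul c a \<in> line smul a" unfolding line_def by auto
lemma a_in_line: "a \<in> line smul a" using in_line[of 1 a] by simp

lemma line_E: "x \<in> line smul a \<Longrightarrow> (\<And>c. x = smul c a \<Longrightarrow> P) \<Longrightarrow> P"
  unfolding line_def by auto

lemma idem_pow: "(e::'a) * e = e \<Longrightarrow> e ^ Suc n = e"
  by (induction n) simp_all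

lemma idem_pow1: "(e::'a) * e = e \<Longrightarrow> m \<ge> 1 \<Longrightarrow> e ^ m = e"
  by (cases m) (simp, simp only: idem_pow)

lemma mm: "smul s x * smul t y = smul (s*t) (x*y)"
  by (metis ml mr scale_scale)

lemma pow_smul: "(smul s b) ^ Suc n = smul (s ^ Suc n) (b ^ Suc n)"
proof (induction n)
  case 0 then show ?case by simp
next
  case (Suc n)
  have "(smul s b) ^ Suc (Suc n) = smul s b * smul (s ^ Suc n) (b ^ Suc n)"
    using Suc by (simp only: power_Suc[of "smul s b" "Suc n"])
  also have "\<dots> = smul (s ^ Suc (Suc n)) (b ^ Suc (Suc n))"
    by (simp only: mm power_Suc[of s "Suc n"] power_Suc[of b "Suc n"])
  finally show ?case .
qed

lemma nqi:
  assumes "\<not> quasi_idempotent smul a" and "\<forall>m\<ge>1. b ^ m \<in> line smul a"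
  shows "\<forall>m\<ge>2. b ^ m = 0"
proof -
  from assms(2) have "b ^ 1 \<in> line smul a" by blast
  then obtain s where bs: "b = smul s a" by (auto elim: line_E)
  show ?thesis
  proof (cases "s = 0")
    case True then have "b = 0" using bs by simp
    then show ?thesis by (auto simp: power_0_left)
  next
    case False
    from assms(2) have "b ^ 2 \<in> line smul a" by (metis one_le_numeral)
    then obtain t where "b ^ 2 = smul t a" by (auto elim: line_E)
    moreover have "b ^ 2 = smul (s^2) (a * a)" using bs
      by (simp add: power2_eq_square mm)
    ultimately have "smul (s^2) (a*a) = smul t a" by simp
    then have "smul (inverse (s^2)) (smul (s^2) (a*a)) = smul (inverse (s^2)) (smul t a)" by simp
    then have aa: "a * a = smul (inverse (s^2) * t) a" using False by simp
    have "inverse (s^2) * t = 0" using assms(1) aa unfolding quasi_idempotent_def by blast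
    then have "a * a = 0" using aa by simp
    then have b2: "b * b = 0" using bs by (simp add: mm)
    show ?thesis
    proof (intro allI impI)
      fix m :: nat assume "m \<ge> 2"
      then obtain k where "m = k + 2" by (metis le_add_diff_inverse2)
      then show "b ^ m = 0" using b2 by (simp add: mult.assoc[symmetric])
    qed
  qed
qed

lemma qi_idem:
  assumes "quasi_idempotent smul a"
  obtains r where "r \<noteq> 0" "smul (inverse r) a * smul (inverse r) a = smul (inverse r) a"
    "a = smul r (smul (inverse r) a)"
proof -
  from assms obtain r where r: "r \<noteq> 0" "a * a = smul r a" unfolding quasi_idempotent_def by blast
  have "smul (inverse r) a * smul (inverse r) a = smul (inverse r) (smul (inverse r) (a*a))"
    by (simp add: mm)
  also have "\<dots> = smul (inverse r) a" using r by simp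
  finally show ?thesis using that r by simp
qed


lemma sub_mult_left: "x \<in> line smul a \<Longrightarrow> c * a \<in> line smul a \<Longrightarrow> c * x \<in> line smul a"
  by (erule line_E) (metis mr subspace_scale line_sub)
lemma sub_mult_right: "x \<in> line smul a \<Longrightarrow> a * c \<in> line smul a \<Longrightarrow> x * c \<in> line smul a"
  by (erule line_E) (metis ml subspace_scale line_sub)

lemma L1: "\<not> quasi_idempotent smul a \<Longrightarrow> mathieu \<theta> smul (line smul a)"
proof -
  assume nq: "\<not> quasi_idempotent smul a"
  have z: "0 \<in> line smul a" using in_line[of 0 a] by simp
  have "\<forall>b. (\<forall>m\<ge>1. b ^ m \<in> line smul a) \<longrightarrow> (\<forall>c d. \<exists>N. \<forall>m\<ge>N. c * b ^ m * d \<in> line smul a)"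
    using nqi[OF nq] z by (metis mult_zero_left mult_zero_right)
  moreover have "\<forall>b. (\<forall>m\<ge>1. b ^ m \<in> line smul a) \<longrightarrow> (\<forall>c. \<exists>N. \<forall>m\<ge>N. c * b ^ m \<in> line smul a)"
    using nqi[OF nq] z by (metis mult_zero_right)
  moreover have "\<forall>b. (\<forall>m\<ge>1. b ^ m \<in> line smul a) \<longrightarrow> (\<forall>c. \<exists>N. \<forall>m\<ge>N. b ^ m * c \<in> line smul a)"
    using nqi[OF nq] z by (metis mult_zero_left)
  ultimately show ?thesis using line_sub
    by (cases \<theta>) (auto simp: left_mathieu_def right_mathieu_def two_sided_mathieu_def)
qed

lemma pow_in: "x \<in> line smul a \<Longrightarrow> m \<ge> 1 \<Longrightarrow> (\<forall>y\<in>line smul a. \<forall>c. c * y \<in> line smul a) \<Longrightarrow> x ^ m \<in> line smul a"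
proof (induction m)
  case 0 then show ?case by simp
next
  case (Suc m)
  show ?case
  proof (cases "m = 0")
    case True then show ?thesis using Suc by simp
  next
    case False then have "x ^ m \<in> line smul a" using Suc by simp
    then show ?thesis using Suc.prems(3) Suc.prems(1) by simp
  qed
qed

lemma L2: "ideal \<theta> smul (line smul a) \<Longrightarrow> mathieu \<theta> smul (line smul a)"
proof (cases \<theta>)
  case TwoSided
  assume i: "ideal \<theta> smul (line smul a)"
  have *: "c * b ^ m * d \<in> line smul a" if "\<forall>m\<ge>1. b ^ m \<in> line smul a" "m \<ge> 1" for b c d m
    using i TwoSided that by auto
  have "two_sided_mathieu smul (line smul a)" unfolding two_sided_mathieu_def
  proof (intro conjI allI impI)
    show "subspace (line smul a)" by (rule line_sub)
    fix b c d assume h: "\<forall>m\<ge>1. b ^ m \<in> line smul a"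
    show "\<exists>N. \<forall>m\<ge>N. c * b ^ m * d \<in> line smul a"
      by (rule exI[of _ 1]) (auto intro: *[OF h])
  qed
  then show ?thesis using TwoSided by simp
next
  case Left then show "ideal \<theta> smul (line smul a) \<Longrightarrow> mathieu \<theta> smul (line smul a)"
   by (auto simp: left_mathieu_def)
next
  case Right then show "ideal \<theta> smul (line smul a) \<Longrightarrow> mathieu \<theta> smul (line smul a)"
   by (auto simp: right_mathieu_def)
next
  case PreTwoSided then show "ideal \<theta> smul (line smul a) \<Longrightarrow> mathieu \<theta> smul (line smul a)"
   by (auto simp: left_mathieu_def right_mathieu_def)
qed

lemma L3: assumes "mathieu \<theta> smul (line smul a)" "quasi_idempotent smul a"
  shows "ideal \<theta> smul (line smul a)"
proof -
  obtain r where r: "r \<noteq> 0" and idem: "smul (inverse r) a * smul (inverse r) a = smul (inverse r) a"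
    and ar: "a = smul r (smul (inverse r) a)" using qi_idem[OF assms(2)] by blast
  define e where "e = smul (inverse r) a"
  have ein: "e \<in> line smul a" unfolding e_def by (rule in_line)
  have ee: "e * e = e" using idem unfolding e_def .
  have epow: "\<And>m. m \<ge> 1 \<Longrightarrow> e ^ m = e" using idem_pow1[OF ee] .
  have ep: "\<forall>m\<ge>1. e ^ m \<in> line smul a"
    using ein epow by simp
  have ae: "a = smul r e" using ar e_def by simp
  have Lc: "left_mathieu smul (line smul a) \<Longrightarrow> c * a \<in> line smul a" for c
  proof -
    assume "left_mathieu smul (line smul a)"
    then obtain N where "\<forall>m\<ge>N. c * e ^ m \<in> line smul a" using ep unfolding left_mathieu_def by blast
    then have "c * e ^ Suc N \<in> line smul a" using le_SucI[OF le_refl] by blast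
    moreover have "e ^ Suc N = e" by (rule epow) simp
    ultimately have "c * e \<in> line smul a" by metis
    then show ?thesis unfolding ae by (metis mr subspace_scale line_sub)
  qed
  have Rc: "right_mathieu smul (line smul a) \<Longrightarrow> a * c \<in> line smul a" for c
  proof -
    assume "right_mathieu smul (line smul a)"
    then obtain N where "\<forall>m\<ge>N. e ^ m * c \<in> line smul a" using ep unfolding right_mathieu_def by blast
    then have "e ^ Suc N * c \<in> line smul a" using le_SucI[OF le_refl] by blast
    moreover have "e ^ Suc N = e" by (rule epow) simp
    ultimately have "e * c \<in> line smul a" by metis
    then show ?thesis unfolding ae by (metis ml subspace_scale line_sub)
  qed
  have Tc: "two_sided_mathieu smul (line smul a) \<Longrightarrow> c * a * d \<in> line smul a" for c d
  proof -
    assume "two_sided_mathieu smul (line smul a)"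
    then obtain N where "\<forall>m\<ge>N. c * e ^ m * d \<in> line smul a" using ep unfolding two_sided_mathieu_def by blast
    then have "c * e ^ Suc N * d \<in> line smul a" using le_SucI[OF le_refl] by blast
    moreover have "e ^ Suc N = e" by (rule epow) simp
    ultimately have "c * e * d \<in> line smul a" by metis
    then show ?thesis unfolding ae by (metis ml mr subspace_scale line_sub)
  qed
  show ?thesis
  proof (cases \<theta>)
    case Left
    have lm: "left_mathieu smul (line smul a)" using assms(1) Left by simp
    have "\<forall>x\<in>line smul a. \<forall>c. c * x \<in> line smul a" using sub_mult_left Lc[OF lm] by blast
    then show ?thesis using Left line_sub by simp
  next
    case Right
    have lm: "right_mathieu smul (line smul a)" using assms(1) Right by simp
    have "\<forall>x\<in>line smul a. \<forall>c. x * c \<in> line smul a" using sub_mult_right Rc[OF lm] by blast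
    then show ?thesis using Right line_sub by simp
  next
    case PreTwoSided
    have lm: "left_mathieu smul (line smul a)" "right_mathieu smul (line smul a)"
      using assms(1) PreTwoSided by simp_all
    have "\<forall>x\<in>line smul a. \<forall>c. c * x \<in> line smul a \<and> x * c \<in> line smul a"
      using sub_mult_right Rc[OF lm(2)] sub_mult_left Lc[OF lm(1)] by blast
    then show ?thesis using PreTwoSided line_sub by simp
  next
    case TwoSided
    have lm: "two_sided_mathieu smul (line smul a)" using assms(1) TwoSided by simp
    have "c * a \<in> line smul a" "a * c \<in> line smul a" for c
      using Tc[OF lm, of c 1] Tc[OF lm, of 1 c] by simp_all
    then have "\<forall>x\<in>line smul a. \<forall>c. c * x \<in> line smul a \<and> x * c \<in> line smul a"
      using sub_mult_right sub_mult_left by blast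
    then show ?thesis using TwoSided line_sub by simp
  qed
qed

lemma smul1: "smul c a = smul c 1 * a" "smul c a = a * smul c 1"
  using ml[of c 1 a] mr[of c a 1] by simp_all

lemma L4: "ideal \<theta> smul (line smul a) \<longleftrightarrow> line smul a = gen \<theta> smul a"
proof (cases \<theta>)
  case Left
  have "line smul a \<subseteq> {c * a |c. True}"
  proof
    fix x assume "x \<in> line smul a"
    then obtain k where "x = smul k a" by (rule line_E)
    then have "x = smul k 1 * a" using smul1(1)[of k a] by simp
    then show "x \<in> {c * a |c. True}" by blast
  qed
  moreover have "ideal \<theta> smul (line smul a) \<Longrightarrow> {c * a |c. True} \<subseteq> line smul a"
    using Left a_in_line by auto
  moreover have "line smul a = {c * a |c. True} \<Longrightarrow> ideal \<theta> smul (line smul a)"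
  proof -
    assume eq: "line smul a = {c * a |c. True}"
    have "c * a \<in> line smul a" for c using eq by blast
    then have "\<forall>x\<in>line smul a. \<forall>c. c * x \<in> line smul a" using sub_mult_left by blast
    then show ?thesis using Left line_sub by simp
  qed
  ultimately have "ideal \<theta> smul (line smul a) \<longleftrightarrow> line smul a = {c * a |c. True}" by blast
  then show ?thesis by (simp only: Left gen.simps)
next
  case Right
  have "line smul a \<subseteq> {a * c |c. True}"
  proof
    fix x assume "x \<in> line smul a"
    then obtain k where "x = smul k a" by (rule line_E)
    then have "x = a * smul k 1" using smul1(2)[of k a] by simp
    then show "x \<in> {a * c |c. True}" by blast
  qed
  moreover have "ideal \<theta> smul (line smul a) \<Longrightarrow> {a * c |c. True} \<subseteq> line smul a"
    using Right a_in_line by auto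
  moreover have "line smul a = {a * c |c. True} \<Longrightarrow> ideal \<theta> smul (line smul a)"
  proof -
    assume eq: "line smul a = {a * c |c. True}"
    have "a * c \<in> line smul a" for c using eq by blast
    then have "\<forall>x\<in>line smul a. \<forall>c. x * c \<in> line smul a" using sub_mult_right by blast
    then show ?thesis using Right line_sub by simp
  qed
  ultimately have "ideal \<theta> smul (line smul a) \<longleftrightarrow> line smul a = {a * c |c. True}" by blast
  then show ?thesis by (simp only: Right gen.simps)
next
  case PreTwoSided
  let ?G = "{a * c + d * a |c d. True}"
  have "line smul a \<subseteq> ?G"
  proof
    fix x assume "x \<in> line smul a"
    then obtain k where "x = smul k a" by (auto elim: line_E)
    then have "x = a * smul k 1 + 0 * a" using smul1(2)[of k a] by simp
    then show "x \<in> ?G" by blast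
  qed
  moreover have "ideal \<theta> smul (line smul a) \<Longrightarrow> ?G \<subseteq> line smul a"
    using PreTwoSided a_in_line line_sub by (auto intro: subspace_add)
  moreover have "line smul a = ?G \<Longrightarrow> ideal \<theta> smul (line smul a)"
  proof -
    assume eq: "line smul a = ?G"
    have "c * a \<in> line smul a" "a * c \<in> line smul a" for c
    proof -
      have "c * a = a * 0 + c * a" by simp
      then show "c * a \<in> line smul a" using eq by blast
      have "a * c = a * c + 0 * a" by simp
      then show "a * c \<in> line smul a" using eq by blast
    qed
    then have "\<forall>x\<in>line smul a. \<forall>c. c * x \<in> line smul a \<and> x * c \<in> line smul a" using sub_mult_left sub_mult_right by blast
    then show ?thesis using PreTwoSided line_sub by simp
  qed
  ultimately have "ideal \<theta> smul (line smul a) \<longleftrightarrow> line smul a = ?G" by blast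
  then show ?thesis by (simp only: PreTwoSided gen.simps)
next
  case TwoSided
  let ?F = "{I. ideal TwoSided smul I \<and> a \<in> I}"
  have sub: "line smul a \<subseteq> I" if "I \<in> ?F" for I
  proof
    fix x assume "x \<in> line smul a"
    then obtain k where "x = smul k a" by (rule line_E)
    moreover have "subspace I" "a \<in> I" using that by auto
    ultimately show "x \<in> I" using subspace_scale by blast
  qed
  have "ideal \<theta> smul (line smul a) \<Longrightarrow> line smul a = \<Inter>?F"
  proof -
    assume "ideal \<theta> smul (line smul a)"
    then have "line smul a \<in> ?F" using TwoSided a_in_line by simp
    then show ?thesis using sub by blast
  qed
  moreover have "ideal TwoSided smul (\<Inter>?F)"
  proof -
    have "subspace (\<Inter>?F)" unfolding subspace_def
      by (auto simp: subspace_def)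
    moreover have "\<forall>x\<in>\<Inter>?F. \<forall>c. c * x \<in> \<Inter>?F \<and> x * c \<in> \<Inter>?F" by auto
    ultimately show ?thesis by simp
  qed
  moreover have "line smul a = \<Inter>?F \<Longrightarrow> ideal \<theta> smul (line smul a)"
    using calculation(2) TwoSided by simp
  ultimately have "ideal \<theta> smul (line smul a) \<longleftrightarrow> line smul a = \<Inter>?F" by blast
  then show ?thesis by (simp only: TwoSided gen.simps)
qed

end

theorem proposition4p8:
  fixes smul :: "'k::field \<Rightarrow> 'a::ring_1 \<Rightarrow> 'a"
    and \<theta> :: mtype and a :: 'a
  assumes "is_algebra smul"
    and "a \<noteq> 0"
  shows "(mathieu \<theta> smul (line smul a) \<longleftrightarrow>
            (ideal \<theta> smul (line smul a) \<or> \<not> quasi_idempotent smul a))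
         \<and> (ideal \<theta> smul (line smul a) \<longleftrightarrow> line smul a = gen \<theta> smul a)"
proof -
  interpret alg_ctx smul by (unfold_locales) (rule assms(1))
  show ?thesis using L1 L2 L3 L4 by blast
qed

end
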